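(* Let $n,k$ be positive integers and $G=G_{n,k}\le\mathrm{Aut}_{\mathrm{gr}}(\Bbbk_{-1}[u,v])$. Then $G$ contains no quasi-reflections if and only if $k\not\equiv2\pmod4$ and $\gcd(n,k)\le2$.
   Context: $\Bbbk$ is algebraically closed of characteristic $0$; $\Bbbk_{-1}[u,v]=\Bbbk\langle u,v\rangle/(vu+uv)$, with matrices $\begin{pmatrix}a&b\\c&d\end{pmatrix}$ acting by $u\mapsto au+cv$, $v\mapsto bu+dv$. With $\omega$ a primitive $(2nk)$th root of unity, $G_{n,k}$ is generated by $\mathrm{diag}(\omega^{2k},\omega^{-2k})$ and $\begin{pmatrix}0&\omega^n\\\omega^n&0\end{pmatrix}$. For a graded automorphism $g$, $\mathrm{Tr}(g)=\sum_i\mathrm{tr}(g|_{A_i})t^i$, and $g$ is a quasi-reflection if $\mathrm{Tr}(g)=\frac1{(1-t)(1-\lambda t)}$ for some $\lambda\ne1$. *)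

theory Defs
  imports "HOL-Computational_Algebra.Polynomial" "HOL-Computational_Algebra.Formal_Power_Series"
begin

datatype 'a m2 = M2 'a 'a 'a 'a  \<comment> \<open>M2 a b c d = [[a,b],[c,d]]\<close>

fun m2_mult :: "'a::comm_ring_1 m2 \<Rightarrow> 'a m2 \<Rightarrow> 'a m2" where
  "m2_mult (M2 a b c d) (M2 a' b' c' d') =
     M2 (a*a' + b*c') (a*b' + b*d') (c*a' + d*c') (c*b' + d*d')"

fun m2_inv :: "'a::field m2 \<Rightarrow> 'a m2" where
  "m2_inv (M2 a b c d) = (let \<Delta> = a*d - b*c in M2 (d/\<Delta>) (-b/\<Delta>) (-c/\<Delta>) (a/\<Delta>))"

definition m2_one :: "'a::comm_ring_1 m2" where "m2_one = M2 1 0 0 1"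

inductive_set gen_group :: "'a::field m2 set \<Rightarrow> 'a m2 set" for S where
  one: "m2_one \<in> gen_group S"
| gen: "g \<in> S \<Longrightarrow> g \<in> gen_group S"
| mult: "g \<in> gen_group S \<Longrightarrow> h \<in> gen_group S \<Longrightarrow> m2_mult g h \<in> gen_group S"
| inv: "g \<in> gen_group S \<Longrightarrow> m2_inv g \<in> gen_group S"

definition G_nk :: "nat \<Rightarrow> nat \<Rightarrow> 'a::field \<Rightarrow> 'a m2 set" where
  "G_nk n k \<omega> = gen_group {M2 (\<omega>^(2*k)) 0 0 (inverse \<omega> ^ (2*k)), M2 0 (\<omega>^n) (\<omega>^n) 0}"

text \<open>Elements are given by coefficients on the normal-form monomials u^a v^b
  (a basis of k_{-1}[u,v]); the product is determined by vu = -uv: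
  (u^a1 v^b1)(u^a2 v^b2) = (-1)^(b1*a2) u^(a1+a2) v^(b1+b2).
  (Functions without finite support are allowed; this is the completion,
  which contains the polynomial ring as a subring.)\<close>

type_synonym 'a skew = "nat \<times> nat \<Rightarrow> 'a"

definition sk_mult :: "'a::comm_ring_1 skew \<Rightarrow> 'a skew \<Rightarrow> 'a skew" where
  "sk_mult p q = (\<lambda>(a,b). \<Sum>a1\<le>a. \<Sum>b1\<le>b.
       p (a1,b1) * q (a - a1, b - b1) * (-1) ^ (b1 * (a - a1)))"

definition sk_mono :: "nat \<Rightarrow> nat \<Rightarrow> 'a::comm_ring_1 skew" where
  "sk_mono a b = (\<lambda>m. if m = (a,b) then 1 else 0)"

fun sk_pow :: "'a::comm_ring_1 skew \<Rightarrow> nat \<Rightarrow> 'a skew" where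
  "sk_pow p 0 = sk_mono 0 0"
| "sk_pow p (Suc m) = sk_mult p (sk_pow p m)"

fun act_u :: "'a::comm_ring_1 m2 \<Rightarrow> 'a skew" where
  "act_u (M2 a b c d) = (\<lambda>m. a * sk_mono 1 0 m + c * sk_mono 0 1 m)"

fun act_v :: "'a::comm_ring_1 m2 \<Rightarrow> 'a skew" where
  "act_v (M2 a b c d) = (\<lambda>m. b * sk_mono 1 0 m + d * sk_mono 0 1 m)"

definition act_mono :: "'a::comm_ring_1 m2 \<Rightarrow> nat \<Rightarrow> nat \<Rightarrow> 'a skew" where
  "act_mono g a b = sk_mult (sk_pow (act_u g) a) (sk_pow (act_v g) b)"

text \<open>tr(g|A_i): A_i has basis u^a v^(i-a), a = 0..i.\<close>
definition tr_deg :: "'a::comm_ring_1 m2 \<Rightarrow> nat \<Rightarrow> 'a" where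
  "tr_deg g i = (\<Sum>a\<le>i. act_mono g a (i - a) (a, i - a))"

definition trace_series :: "'a::comm_ring_1 m2 \<Rightarrow> 'a fps" where
  "trace_series g = Abs_fps (tr_deg g)"

definition quasi_reflection :: "'a::field m2 \<Rightarrow> bool" where
  "quasi_reflection g \<longleftrightarrow> (\<exists>l. l \<noteq> 1 \<and>
      trace_series g = inverse ((1 - fps_X) * (1 - fps_const l * fps_X)))"

definition primitive_root :: "nat \<Rightarrow> 'a::field \<Rightarrow> bool" where
  "primitive_root N w \<longleftrightarrow> w ^ N = 1 \<and> (\<forall>m. 0 < m \<and> m < N \<longrightarrow> w ^ m \<noteq> 1)"

end

theory Submission
  imports Defs
begin


definition cm :: "'a::comm_ring_1 \<Rightarrow> nat \<Rightarrow> nat \<Rightarrow> 'a skew" where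
  "cm c a b = (\<lambda>m. if m = (a,b) then c else 0)"

lemma sk_mult_cm: "sk_mult (cm c a b) (cm c' a' b') = cm (c*c'*(-1)^(b*a')) (a+a') (b+b')"
proof (rule ext, clarify)
  fix x y
  have "sk_mult (cm c a b) (cm c' a' b') (x,y) = (\<Sum>a1\<le>x. \<Sum>b1\<le>y. if a1 = a then (if b1 = b then
     (if x - a = a' \<and> y - b = b' then c*c'*(-1)^(b*a') else 0) else 0) else 0)"
    unfolding sk_mult_def cm_def prod.case by (intro sum.cong refl) auto
  also have "\<dots> = (if a \<le> x \<and> b \<le> y \<and> x - a = a' \<and> y - b = b' then c*c'*(-1)^(b*a') else 0)"
  proof -
    have "\<And>a1. (\<Sum>b1\<le>y. if a1 = a then (if b1 = b then
     (if x - a = a' \<and> y - b = b' then c*c'*(-1)^(b*a') else 0) else 0) else 0) =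
      (if a1 = a then (if b \<le> y \<and> x - a = a' \<and> y - b = b' then c*c'*(-1)^(b*a') else 0) else 0)"
      by (auto simp: sum.delta')
    then show ?thesis by (simp add: sum.delta')
  qed
  also have "\<dots> = cm (c*c'*(-1)^(b*a')) (a+a') (b+b') (x,y)"
    unfolding cm_def by auto
  finally show "sk_mult (cm c a b) (cm c' a' b') (x,y) = cm (c*c'*(-1)^(b*a')) (a+a') (b+b') (x,y)" .
qed

lemma sk_mono_cm: "sk_mono a b = cm 1 a b" unfolding sk_mono_def cm_def by auto

lemma pow_u: "sk_pow (cm c 1 0) m = cm (c^m) m 0"
  by (induction m) (simp_all add: sk_mono_cm sk_mult_cm)
lemma pow_v: "sk_pow (cm c 0 1) m = cm (c^m) 0 m"
  by (induction m) (simp_all add: sk_mono_cm sk_mult_cm)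

lemma act_u_diag: "act_u (M2 a 0 0 d) = cm a 1 0"
  by (auto simp: cm_def sk_mono_def)
lemma act_v_diag: "act_v (M2 a 0 0 d) = cm d 0 1"
  by (auto simp: cm_def sk_mono_def)
lemma act_u_anti: "act_u (M2 0 b c 0) = cm c 0 1"
  by (auto simp: cm_def sk_mono_def)
lemma act_v_anti: "act_v (M2 0 b c 0) = cm b 1 0"
  by (auto simp: cm_def sk_mono_def)


lemma t1: "(-1::'a::comm_ring_1)^(j*j) = (-1)^j"
        by (simp add: minus_one_power_iff)
lemma t3: "(- (b * c::'a::comm_ring_1)) ^ m = c^m * b^m * (-1)^m"
proof -
  have "(- (b * c)) ^ m = ((-1) * b * c)^m" by simp
  also have "\<dots> = (-1)^m * b^m * c^m" by (simp only: power_mult_distrib)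
  finally show ?thesis by (simp only: mult_ac)
qed

lemma tr_diag: "tr_deg (M2 a 0 0 d) i = (\<Sum>j\<le>i. a^j * d^(i-j))"
  unfolding tr_deg_def act_mono_def act_u_diag act_v_diag pow_u pow_v sk_mult_cm
  by (intro sum.cong refl) (simp add: cm_def)

lemma tr_anti: "tr_deg (M2 0 b c 0) i = (if even i then (-(b*c))^(i div 2) else 0)"
proof -
  have "tr_deg (M2 0 b c 0) i = (\<Sum>j\<le>i. if j = i div 2 then (if even i then (-(b*c))^(i div 2) else 0) else 0)"
    unfolding tr_deg_def act_mono_def act_u_anti act_v_anti pow_u pow_v sk_mult_cm
  proof (intro sum.cong refl)
    fix j assume "j \<in> {..i}"
    then have ji: "j \<le> i" by simp
    show "cm (c ^ j * b ^ (i - j) * (- 1) ^ (j * (i - j))) (0 + (i - j)) (j + 0) (j, i - j) =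
         (if j = i div 2 then (if even i then (-(b*c))^(i div 2) else 0) else 0)"
    proof (cases "j = i div 2 \<and> even i")
      case True
      then have ij: "i - j = j" by auto
      then show ?thesis using True by (simp add: cm_def t1 t3)
    next
      case False
      have "j \<noteq> i - j"
      proof
        assume "j = i - j" then have "i = 2*j" using ji by arith
        then show False using False by auto
      qed
      then show ?thesis using False by (auto simp: cm_def)
    qed
  qed
  also have "\<dots> = (if even i then (-(b*c))^(i div 2) else 0)"
    by (simp add: sum.delta')
  finally show ?thesis .
qed

lemma geo: "Abs_fps (\<lambda>i. a^i) * (1 - fps_const a * fps_X) = (1 :: 'a::comm_ring_1 fps)"
proof -
  have "Abs_fps (\<lambda>i. a^i) * (1 - fps_const a * fps_X) =
        Abs_fps (\<lambda>i. a^i) - fps_const a * (fps_X * Abs_fps (\<lambda>i. a^i))"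
    by (simp add: algebra_simps)
  also have "\<dots> = 1"
  proof (rule fps_ext)
    fix m show "fps_nth (Abs_fps (\<lambda>i. a^i) - fps_const a * (fps_X * Abs_fps (\<lambda>i. a^i))) m = fps_nth (1::'a fps) m"
      by (cases m) auto
  qed
  finally show ?thesis .
qed

lemma trace_diag_prod: "trace_series (M2 a 0 0 d) = Abs_fps (\<lambda>i. a^i) * Abs_fps (\<lambda>i. d^i)"
  unfolding trace_series_def
  by (rule fps_ext) (simp add: tr_diag fps_mult_nth atLeast0AtMost)

lemma trace_diag: "trace_series (M2 a 0 0 d) * ((1 - fps_const a * fps_X) * (1 - fps_const (d::'a::comm_ring_1) * fps_X)) = 1"
proof -
  have "trace_series (M2 a 0 0 d) * ((1 - fps_const a * fps_X) * (1 - fps_const d * fps_X))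
     = (Abs_fps (\<lambda>i. a^i) * (1 - fps_const a * fps_X)) * (Abs_fps (\<lambda>i. d^i) * (1 - fps_const d * fps_X))"
    unfolding trace_diag_prod by (simp only: mult_ac)
  then show ?thesis by (simp only: geo mult_1_left)
qed

lemma trace_anti: "trace_series (M2 0 b c 0) * (1 + fps_const (b*c) * fps_X^2) = (1::'a::comm_ring_1 fps)"
proof -
  let ?T = "trace_series (M2 0 b c 0)"
  have "?T * (1 + fps_const (b*c) * fps_X^2) = ?T + fps_const (b*c) * (fps_X^2 * ?T)"
    by (simp add: algebra_simps)
  also have "\<dots> = 1"
  proof (rule fps_ext)
    fix m show "fps_nth (?T + fps_const (b*c) * (fps_X^2 * ?T)) m = fps_nth (1::'a fps) m"
    proof (cases m)
      case 0 then show ?thesis by (simp add: trace_series_def tr_anti fps_X_power_mult_nth)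
    next
      case (Suc m')
      then show ?thesis
      proof (cases m')
        case 0 then show ?thesis using Suc by (simp add: trace_series_def tr_anti fps_X_power_mult_nth)
      next
        case (Suc m'')
        then show ?thesis using \<open>m = Suc m'\<close> by (simp add: trace_series_def tr_anti fps_X_power_mult_nth)
      qed
    qed
  qed
  finally show ?thesis .
qed

lemma inv_lemma:
  fixes T D E :: "'a::field fps"
  assumes "T * D = 1" "fps_nth E 0 \<noteq> 0"
  shows "T = inverse E \<longleftrightarrow> D = E"
proof
  assume "T = inverse E"
  then have "T * E = 1" using assms(2) by (simp add: inverse_mult_eq_1)
  then have "D = D * (T * E)" by simp
  also have "\<dots> = (T * D) * E" by (simp only: mult_ac)
  finally show "D = E" using assms(1) by simp
next
  assume "D = E"
  then have "E * T = 1" using assms(1) by (simp add: mult.commute)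
  then show "T = inverse E" using fps_inverse_unique[of E T] by simp
qed

lemma poly2_eq: "(1 - fps_const p * fps_X + fps_const q * fps_X^2 = 1 - fps_const p' * fps_X + fps_const q' * fps_X^2)
   \<longleftrightarrow> p = p' \<and> q = (q'::'a::comm_ring_1)"
proof
  assume h: "1 - fps_const p * fps_X + fps_const q * fps_X^2 = 1 - fps_const p' * fps_X + fps_const q' * fps_X^2"
  have "fps_nth (1 - fps_const p * fps_X + fps_const q * fps_X^2) 1 = fps_nth (1 - fps_const p' * fps_X + fps_const q' * fps_X^2) 1"
    using arg_cong[OF h, of "\<lambda>x. fps_nth x 1"] by simp
  then have "p = p'" by (simp add: fps_X_power_nth)
  have "fps_nth (1 - fps_const p * fps_X + fps_const q * fps_X^2) 2 = fps_nth (1 - fps_const p' * fps_X + fps_const q' * fps_X^2) 2"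
    using arg_cong[OF h, of "\<lambda>x. fps_nth x 2"] by simp
  then have "q = q'" by (simp add: fps_X_power_nth)
  with \<open>p = p'\<close> show "p = p' \<and> q = q'" ..
qed simp

lemma prod_expand: "(1 - fps_const a * fps_X) * (1 - fps_const d * fps_X) =
   1 - fps_const (a+d) * fps_X + fps_const (a*d) * (fps_X^2::'a::comm_ring_1 fps)"
  by (simp add: algebra_simps power2_eq_square flip: fps_const_add fps_const_mult)



lemma E_l: "(1 - fps_X) * (1 - fps_const l * fps_X) =
   1 - fps_const (1+l) * fps_X + fps_const l * (fps_X^2::'a::comm_ring_1 fps)"
  using prod_expand[of 1 l] by simp

lemma QR_iff:
  fixes g :: "'a::field m2"
  assumes "trace_series g * D = 1"
  shows "quasi_reflection g \<longleftrightarrow> (\<exists>l. l \<noteq> 1 \<and> D = 1 - fps_const (1+l) * fps_X + fps_const l * fps_X^2)"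
  unfolding quasi_reflection_def
proof (intro ex_cong1 conj_cong refl)
  fix l :: 'a
  show "trace_series g = inverse ((1 - fps_X) * (1 - fps_const l * fps_X)) \<longleftrightarrow>
    D = 1 - fps_const (1 + l) * fps_X + fps_const l * fps_X\<^sup>2"
    using inv_lemma[OF assms, of "(1 - fps_X) * (1 - fps_const l * fps_X)"] by (simp add: E_l)
qed

lemma QR_diag: "quasi_reflection (M2 a 0 0 (d::'a::field)) \<longleftrightarrow> (a = 1 \<and> d \<noteq> 1) \<or> (d = 1 \<and> a \<noteq> 1)"
proof -
  have "quasi_reflection (M2 a 0 0 d) \<longleftrightarrow> (\<exists>l. l \<noteq> 1 \<and> a + d = 1 + l \<and> a * d = l)"
    using QR_iff[OF trace_diag[of a d]] by (simp add: prod_expand poly2_eq)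
  also have "\<dots> \<longleftrightarrow> (a = 1 \<and> d \<noteq> 1) \<or> (d = 1 \<and> a \<noteq> 1)"
  proof
    assume "\<exists>l. l \<noteq> 1 \<and> a + d = 1 + l \<and> a * d = l"
    then obtain l where l: "l \<noteq> 1" "a + d = 1 + l" "a * d = l" by blast
    then have "(a - 1) * (d - 1) = 0" by (simp add: algebra_simps)
    then have "a = 1 \<or> d = 1" by simp
    then show "(a = 1 \<and> d \<noteq> 1) \<or> (d = 1 \<and> a \<noteq> 1)" using l by auto
  next
    assume "(a = 1 \<and> d \<noteq> 1) \<or> (d = 1 \<and> a \<noteq> 1)"
    then show "\<exists>l. l \<noteq> 1 \<and> a + d = 1 + l \<and> a * d = l"
      by (metis add.commute mult_1 mult_1_right)
  qed
  finally show ?thesis .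
qed

lemma QR_anti: "quasi_reflection (M2 0 b c (0::'a::field_char_0)) \<longleftrightarrow> b * c = -1"
proof -
  have D: "1 + fps_const (b*c) * fps_X^2 = 1 - fps_const 0 * fps_X + fps_const (b*c) * (fps_X^2::'a fps)"
    by simp
  have "quasi_reflection (M2 0 b c 0) \<longleftrightarrow> (\<exists>l. l \<noteq> 1 \<and> 0 = 1 + l \<and> b * c = l)"
    using QR_iff[OF trace_anti[of b c]] unfolding D poly2_eq by simp
  also have "\<dots> \<longleftrightarrow> b * c = -1"
  proof
    assume "b * c = -1"
    moreover have "(-1::'a) \<noteq> 1" by simp
    ultimately show "\<exists>l. l \<noteq> 1 \<and> 0 = 1 + l \<and> b * c = l" by (intro exI[of _ "-1"]) simp
  qed (auto simp: eq_neg_iff_add_eq_0 add.commute)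
  finally show ?thesis .
qed


definition E :: "'a::field \<Rightarrow> int \<Rightarrow> 'a" where "E w z = w powi z"

definition dg :: "'a::field \<Rightarrow> int \<Rightarrow> int \<Rightarrow> int \<Rightarrow> int \<Rightarrow> 'a m2" where
  "dg w n k i j = M2 (E w (2*k*i + 2*n*j)) 0 0 (E w (2*n*j - 2*k*i))"

definition ad :: "'a::field \<Rightarrow> int \<Rightarrow> int \<Rightarrow> int \<Rightarrow> int \<Rightarrow> 'a m2" where
  "ad w n k i j = M2 0 (E w (2*k*i + n*(2*j+1))) (E w (n*(2*j+1) - 2*k*i)) 0"

lemma E_mult: "w \<noteq> 0 \<Longrightarrow> x + y = z \<Longrightarrow> E w x * E w y = E w z"
  unfolding E_def by (metis power_int_add)

lemma E_ne0: "w \<noteq> 0 \<Longrightarrow> E w x \<noteq> 0"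
  unfolding E_def by simp

lemma E_inv: "-x = y \<Longrightarrow> inverse (E w x) = E w y"
  unfolding E_def by (metis power_int_minus)

lemma inv_diag: "a \<noteq> 0 \<Longrightarrow> d \<noteq> 0 \<Longrightarrow> m2_inv (M2 a 0 0 (d::'a::field)) = M2 (inverse a) 0 0 (inverse d)"
  by (simp add: Let_def field_simps)

lemma inv_anti: "b \<noteq> 0 \<Longrightarrow> c \<noteq> 0 \<Longrightarrow> m2_inv (M2 0 b c (0::'a::field)) = M2 0 (inverse c) (inverse b) 0"
  by (simp add: Let_def field_simps)

context
  fixes w :: "'a::field" and n k :: int
  assumes w0: "w \<noteq> 0"
begin

lemma mult_dd: "m2_mult (dg w n k i j) (dg w n k i' j') = dg w n k (i+i') (j+j')"
  unfolding dg_def by (simp, intro conjI; rule E_mult[OF w0]; simp add: algebra_simps)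

lemma mult_da: "m2_mult (dg w n k i j) (ad w n k i' j') = ad w n k (i+i') (j+j')"
  unfolding dg_def ad_def by (simp, intro conjI; rule E_mult[OF w0]; simp add: algebra_simps)

lemma mult_ad: "m2_mult (ad w n k i j) (dg w n k i' j') = ad w n k (i-i') (j+j')"
  unfolding dg_def ad_def by (simp, intro conjI; rule E_mult[OF w0]; simp add: algebra_simps)

lemma mult_aa: "m2_mult (ad w n k i j) (ad w n k i' j') = dg w n k (i-i') (j+j'+1)"
  unfolding dg_def ad_def by (simp, intro conjI; rule E_mult[OF w0]; simp add: algebra_simps)

lemma inv_dg: "m2_inv (dg w n k i j) = dg w n k (-i) (-j)"
  unfolding dg_def by (simp del: m2_inv.simps add: inv_diag E_ne0[OF w0], intro conjI; rule E_inv; simp add: algebra_simps)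

lemma inv_ad: "m2_inv (ad w n k i j) = ad w n k i (-j-1)"
  unfolding ad_def by (simp del: m2_inv.simps add: inv_anti E_ne0[OF w0], intro conjI; rule E_inv; simp add: algebra_simps)

end

lemma gen_inv:
  fixes w :: "'a::field" and n k :: nat
  assumes w0: "w \<noteq> 0" and g: "g \<in> G_nk n k w"
  shows "\<exists>i j. g = dg w (int n) (int k) i j \<or> g = ad w (int n) (int k) i j"
  using g unfolding G_nk_def
proof (induction rule: gen_group.induct)
  case one
  have "m2_one = dg w (int n) (int k) 0 0" by (simp add: m2_one_def dg_def E_def)
  then show ?case by blast
next
  case (gen g)
  have "M2 (w^(2*k)) 0 0 (inverse w ^ (2*k)) = dg w (int n) (int k) 1 0"
  proof -
    have p1: "w^(2*k) = w powi (2 * int k)" using power_int_of_nat[of w "2*k"] by simp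
    moreover have "inverse w ^ (2*k) = w powi (- (2 * int k))"
      by (metis p1 power_int_minus power_inverse)
    ultimately show ?thesis unfolding dg_def E_def by simp
  qed
  moreover have "M2 0 (w^n) (w^n) 0 = ad w (int n) (int k) 0 0"
    unfolding ad_def E_def by simp
  ultimately show ?case using gen by blast
next
  case (mult g h)
  then show ?case using mult_dd[OF w0] mult_da[OF w0] mult_ad[OF w0] mult_aa[OF w0] by metis
next
  case (inv g)
  then show ?case using inv_dg[OF w0] inv_ad[OF w0] by metis
qed

lemma gen_mem:
  fixes w :: "'a::field" and n k i j :: nat
  assumes w0: "w \<noteq> 0"
  shows "dg w (int n) (int k) (int i) (int j) \<in> G_nk n k w \<and> ad w (int n) (int k) (int i) (int j) \<in> G_nk n k w"
proof -
  let ?S = "{M2 (w^(2*k)) 0 0 (inverse w ^ (2*k)), M2 0 (w^n) (w^n) 0}"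
  have D: "dg w (int n) (int k) 1 0 \<in> gen_group ?S"
  proof -
    have p1: "w^(2*k) = w powi (2 * int k)" using power_int_of_nat[of w "2*k"] by simp
    moreover have "inverse w ^ (2*k) = w powi (- (2 * int k))"
      by (metis p1 power_int_minus power_inverse)
    ultimately have "M2 (w^(2*k)) 0 0 (inverse w ^ (2*k)) = dg w (int n) (int k) 1 0"
      unfolding dg_def E_def by simp
    then show ?thesis by (metis gen_group.gen insertI1)
  qed
  have T: "ad w (int n) (int k) 0 0 \<in> gen_group ?S"
  proof -
    have "M2 0 (w^n) (w^n) 0 = ad w (int n) (int k) 0 0"
      unfolding ad_def E_def by simp
    then show ?thesis by (metis gen_group.gen insertI1 insertI2)
  qed
  have T2: "dg w (int n) (int k) 0 1 \<in> gen_group ?S"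
    using gen_group.mult[OF T T] mult_aa[OF w0] by simp
  have d0: "dg w (int n) (int k) 0 (int j) \<in> gen_group ?S" for j
  proof (induction j)
    case 0
    have "m2_one = dg w (int n) (int k) 0 0" by (simp add: m2_one_def dg_def E_def)
    then show ?case using gen_group.one[of ?S] by simp
  next
    case (Suc j)
    then show ?case using gen_group.mult[OF Suc T2] mult_dd[OF w0] by (simp add: add.commute)
  qed
  have dd: "dg w (int n) (int k) (int i) (int j) \<in> gen_group ?S" for i
  proof (induction i)
    case 0 then show ?case using d0 by simp
  next
    case (Suc i)
    then show ?case using gen_group.mult[OF Suc D] mult_dd[OF w0] by (simp add: add.commute)
  qed
  have "ad w (int n) (int k) (int i) (int j) \<in> gen_group ?S"
    using gen_group.mult[OF dd T] mult_da[OF w0] by simp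
  then show ?thesis using dd unfolding G_nk_def by blast
qed



lemma prim_ne0: "primitive_root N (w::'a::field) \<Longrightarrow> 0 < N \<Longrightarrow> w \<noteq> 0"
  unfolding primitive_root_def by (metis power_0_left less_not_refl zero_neq_one)

lemma E_one_iff:
  fixes w :: "'a::field"
  assumes pr: "primitive_root N w" and N: "0 < N"
  shows "E w z = 1 \<longleftrightarrow> int N dvd z"
proof -
  have w0: "w \<noteq> 0" using prim_ne0[OF pr N] .
  define q r where "q = z div int N" and "r = z mod int N"
  have z: "int N * q + r = z" unfolding q_def r_def by simp
  have r0: "0 \<le> r" and rN: "r < int N" unfolding r_def using N by auto
  have "E w (int N * q) = 1"
    unfolding E_def using pr by (simp add: power_int_mult primitive_root_def)
  then have Ez: "E w z = E w r" using E_mult[OF w0 z] by simp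
  have Er: "E w r = w ^ nat r" unfolding E_def using r0
    by (metis int_nat_eq power_int_of_nat)
  have "w ^ nat r = 1 \<longleftrightarrow> r = 0"
  proof
    assume h: "w ^ nat r = 1"
    show "r = 0"
    proof (rule ccontr)
      assume "r \<noteq> 0"
      then have "0 < nat r" "nat r < N" using r0 rN by auto
      then show False using h pr unfolding primitive_root_def by blast
    qed
  qed simp
  moreover have "int N dvd z \<longleftrightarrow> r = 0" unfolding r_def by auto
  ultimately show ?thesis using Ez Er by simp
qed

lemma E_neg1_iff:
  fixes w :: "'a::field"
  assumes pr: "primitive_root (2*M) w" and M: "0 < M"
  shows "E w z = -1 \<longleftrightarrow> int (2*M) dvd (z + int M)"
proof -
  have N: "0 < 2*M" using M by simp
  have w0: "w \<noteq> 0" using prim_ne0[OF pr N] .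
  have h2: "E w (int M) * E w (int M) = 1"
    using E_mult[OF w0, of "int M" "int M" "int (2*M)"] E_one_iff[OF pr N, of "int (2*M)"] by simp
  have h1: "E w (int M) \<noteq> 1" using E_one_iff[OF pr N, of "int M"] M
    by (auto dest: zdvd_imp_le)
  have "(E w (int M) - 1) * (E w (int M) + 1) = 0" using h2 by (simp add: algebra_simps)
  then have hm: "E w (int M) = -1" using h1 by (simp add: eq_neg_iff_add_eq_0)
  have "E w (z + int M) = - E w z" using E_mult[OF w0, of z "int M" "z + int M"] hm by simp
  then have "E w z = -1 \<longleftrightarrow> E w (z + int M) = 1" by (metis minus_minus)
  then show ?thesis using E_one_iff[OF pr N] by simp
qed

lemma NT1:
  fixes n k i j :: int
  assumes n: "0 < n" and k: "0 < k" and g: "gcd n k \<le> 2"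
    and d: "2*n*k dvd 2*k*i + 2*n*j"
  shows "2*n*k dvd 2*n*j - 2*k*i"
proof -
  have "2*(n*k) dvd 2*(k*i + n*j)" using d by (simp add: algebra_simps)
  then have "n*k dvd k*i + n*j" by (simp only: dvd_times_left_cancel_iff)
  then have "n dvd k*i + n*j" by (meson dvd_mult_left)
  then have "n dvd k*i" by (simp add: dvd_add_left_iff)
  then have "n dvd gcd (i*n) (i*k)" by (simp add: mult.commute)
  then have "n dvd \<bar>i\<bar> * gcd n k" by (simp add: gcd_mult_distrib_int)
  moreover have "gcd n k dvd 2"
  proof -
    have "0 < gcd n k" using n by simp
    then have "gcd n k = 1 \<or> gcd n k = 2" using g by presburger
    then show ?thesis by auto
  qed
  ultimately have "n dvd \<bar>i\<bar> * 2" by (meson dvd_trans mult_dvd_mono dvd_refl)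
  then have "n dvd \<bar>2*i\<bar>" by (simp add: mult.commute abs_mult)
  then have "n dvd 2*i" by simp
  then have "2*k*n dvd 2*k*(2*i)" by (rule mult_dvd_mono[OF dvd_refl])
  then have "2*n*k dvd 4*k*i" by (simp add: algebra_simps)
  then have "2*n*k dvd (2*k*i + 2*n*j) - 4*k*i" using d by (rule dvd_diff[rotated])
  then show ?thesis by (simp add: algebra_simps)
qed

lemma NT2:
  fixes n k j :: int
  assumes n: "0 < n" and k: "0 < k" and d: "2*n*k dvd 2*n*(2*j+1) + n*k"
  shows "k mod 4 = 2"
proof -
  have "n*(2*k) dvd n*(4*j+2+k)" using d by (simp add: algebra_simps)
  then have "2*k dvd 4*j+2+k" using n by simp
  then obtain c where c: "4*j+2+k = 2*k*c" by (auto elim: dvdE)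
  define q r where "q = k div 4" and "r = k mod 4"
  have kq: "k = 4*q + r" unfolding q_def r_def by simp
  have r: "0 \<le> r" "r < 4" unfolding r_def by auto
  define P where "P = q*c"
  have e: "4*j+2+4*q+r = 8*P + 2*r*c" using c unfolding kq P_def by (simp add: algebra_simps)
  have "r = 0 \<or> r = 1 \<or> r = 2 \<or> r = 3" using r by auto
  moreover have "r \<noteq> 0" proof assume "r = 0" then show False using e by presburger qed
  moreover have "r \<noteq> 1" proof assume "r = 1" then show False using e by presburger qed
  moreover have "r \<noteq> 3" proof assume "r = 3" then show False using e by presburger qed
  ultimately show ?thesis unfolding r_def by auto
qed



theorem mainTheorem5:
  fixes n k :: nat and \<omega> :: "'a :: {alg_closed_field, field_char_0}"
  assumes "0 < n" and "0 < k"
    and "primitive_root (2 * n * k) \<omega>"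
  shows "(\<forall>g \<in> G_nk n k \<omega>. \<not> quasi_reflection g) \<longleftrightarrow> (k mod 4 \<noteq> 2 \<and> gcd n k \<le> 2)"
proof -
  have n: "0 < n" and k: "0 < k" using assms by auto
  have N: "0 < 2*n*k" using n k by simp
  have pr: "primitive_root (2*n*k) \<omega>" using assms by simp
  have pr2: "primitive_root (2*(n*k)) \<omega>" using pr by (simp add: mult.assoc)
  have nk: "0 < n*k" using n k by simp
  have w0: "\<omega> \<noteq> 0" using prim_ne0[OF pr N] .
  have QRdg: "quasi_reflection (dg \<omega> (int n) (int k) i j) \<longleftrightarrow>
     (int (2*n*k) dvd 2*int k*i + 2*int n*j \<and> \<not> int (2*n*k) dvd 2*int n*j - 2*int k*i) \<or>
     (int (2*n*k) dvd 2*int n*j - 2*int k*i \<and> \<not> int (2*n*k) dvd 2*int k*i + 2*int n*j)" for i j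
    unfolding dg_def QR_diag E_one_iff[OF pr N] ..
  have QRad: "quasi_reflection (ad \<omega> (int n) (int k) i j) \<longleftrightarrow>
     int (2*(n*k)) dvd 2*int n*(2*j+1) + int (n*k)" for i j
  proof -
    have "quasi_reflection (ad \<omega> (int n) (int k) i j) \<longleftrightarrow>
       E \<omega> (2*int k*i + int n*(2*j+1)) * E \<omega> (int n*(2*j+1) - 2*int k*i) = -1"
      unfolding ad_def QR_anti ..
    also have "\<dots> \<longleftrightarrow> E \<omega> (2*int n*(2*j+1)) = -1"
      by (subst E_mult[OF w0]) (simp_all add: algebra_simps)
    also have "\<dots> \<longleftrightarrow> int (2*(n*k)) dvd 2*int n*(2*j+1) + int (n*k)"
      by (rule E_neg1_iff[OF pr2 nk])
    finally show ?thesis .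
  qed
  show ?thesis
  proof
    assume H: "\<forall>g \<in> G_nk n k \<omega>. \<not> quasi_reflection g"
    show "k mod 4 \<noteq> 2 \<and> gcd n k \<le> 2"
    proof (rule conjI; rule ccontr)
      assume "\<not> k mod 4 \<noteq> 2"
      then have k4: "k = 4*(k div 4) + 2" by presburger
      define q where "q = k div 4"
      have kq: "int k = 4 * int q + 2" using k4 unfolding q_def by simp
      have mem: "ad \<omega> (int n) (int k) (int 0) (int q) \<in> G_nk n k \<omega>"
        using gen_mem[OF w0] by blast
      have "int (2*(n*k)) dvd 2*int n*(2*int q+1) + int (n*k)"
      proof -
        have "2*int n*(2*int q+1) + int (n*k) = int (2*(n*k))" using kq by (simp add: algebra_simps)
        then show ?thesis by (metis dvd_refl)
      qed
      then have "quasi_reflection (ad \<omega> (int n) (int k) (int 0) (int q))" using QRad by blast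
      then show False using H mem by blast
    next
      assume "\<not> gcd n k \<le> 2"
      then have g2: "2 < gcd n k" by simp
      define g where "g = gcd n k"
      obtain a where a: "n = g * a" unfolding g_def by (metis gcd_dvd1 dvdE)
      obtain b where b: "k = g * b" unfolding g_def by (metis gcd_dvd2 dvdE)
      have g2': "2 < g" using g2 unfolding g_def .
      have a0: "0 < a" using n a by simp
      have b0: "0 < b" using k b by simp
      have bk: "b \<le> k" using b g2' by simp
      have mem: "dg \<omega> (int n) (int k) (int a) (int (k - b)) \<in> G_nk n k \<omega>"
        using gen_mem[OF w0] by blast
      define G A B where "G = int g" and "A = int a" and "B = int b"
      have ni: "int n = G*A" and ki: "int k = G*B" unfolding G_def A_def B_def using a b by simp_all
      have kb: "int (k - b) = G*B - B" using bk ki unfolding B_def by (simp add: of_nat_diff)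
      have G2: "2 < G" using g2' unfolding G_def by simp
      have A0: "0 < A" and B0: "0 < B" using a0 b0 unfolding A_def B_def by simp_all
      have Nint: "int (2*n*k) = 2*A*B*G*G" using ni ki by (simp add: algebra_simps)
      have x: "2*int k*int a + 2*int n*int (k - b) = 2*A*B*G*G"
        unfolding kb ni ki A_def[symmetric] by (simp add: algebra_simps)
      have y: "2*int n*int (k - b) - 2*int k*int a = 2*A*B*G*(G-2)"
        unfolding kb ni ki A_def[symmetric] by (simp add: algebra_simps)
      have pos: "0 < 2*A*B*G" using A0 B0 G2 by simp
      have ypos: "0 < 2*A*B*G*(G-2)" using pos G2 by simp
      have ylt: "2*A*B*G*(G-2) < 2*A*B*G*G" using pos by (simp add: mult_strict_left_mono)
      have ndvd: "\<not> int (2*n*k) dvd 2*int n*int (k - b) - 2*int k*int a"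
        unfolding Nint y
      proof
        assume h: "2*A*B*G*G dvd 2*A*B*G*(G-2)"
        have "2*A*B*G*G \<le> 2*A*B*G*(G-2)" by (rule zdvd_imp_le[OF h ypos])
        then show False using ylt by simp
      qed
      have "quasi_reflection (dg \<omega> (int n) (int k) (int a) (int (k - b)))"
        unfolding QRdg using ndvd x Nint by simp
      then show False using H mem by blast
    qed
  next
    assume C: "k mod 4 \<noteq> 2 \<and> gcd n k \<le> 2"
    have ngi: "int n > 0" "int k > 0" using n k by simp_all
    have gi: "gcd (int n) (int k) \<le> 2" using C by (simp add: gcd_int_int_eq)
    show "\<forall>g \<in> G_nk n k \<omega>. \<not> quasi_reflection g"
    proof (intro ballI notI)
      fix g assume gG: "g \<in> G_nk n k \<omega>" and qr: "quasi_reflection g"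
      obtain i j where ij: "g = dg \<omega> (int n) (int k) i j \<or> g = ad \<omega> (int n) (int k) i j"
        using gen_inv[OF w0 gG] by blast
      then show False
      proof
        assume "g = dg \<omega> (int n) (int k) i j"
        then have q: "(int (2*n*k) dvd 2*int k*i + 2*int n*j \<and> \<not> int (2*n*k) dvd 2*int n*j - 2*int k*i) \<or>
           (int (2*n*k) dvd 2*int n*j - 2*int k*i \<and> \<not> int (2*n*k) dvd 2*int k*i + 2*int n*j)"
          using qr QRdg by simp
        have N': "int (2*n*k) = 2 * int n * int k" by simp
        have h1: "int (2*n*k) dvd 2*int k*i + 2*int n*j \<Longrightarrow> int (2*n*k) dvd 2*int n*j - 2*int k*i"
          unfolding N' using NT1[OF ngi gi] by blast
        have h2: "int (2*n*k) dvd 2*int n*j - 2*int k*i \<Longrightarrow> int (2*n*k) dvd 2*int k*i + 2*int n*j"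
          unfolding N' using NT1[OF ngi gi, of "-i" j] by (simp add: algebra_simps)
        show False using q h1 h2 by blast
      next
        assume "g = ad \<omega> (int n) (int k) i j"
        then have "int (2*(n*k)) dvd 2*int n*(2*j+1) + int (n*k)" using qr QRad by simp
        then have "2*int n*int k dvd 2*int n*(2*j+1) + int n * int k" by (simp add: algebra_simps)
        then have "int k mod 4 = 2" using NT2[OF ngi] by blast
        then have "k mod 4 = 2" by presburger
        then show False using C by simp
      qed
    qed
  qed
qed

end
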